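(* Let $l\ge2$ be an integer and $\varepsilon>0$. Then, as $n\to\infty$, $$\sum_{1\le i\le n}\ \sum_{\substack{d_1,d_2\ge1,\ d_1d_2\le i\\ d_1\mid i,\ d_2\mid i+1\\ \gcd(d_1,d_2)=1}}\frac{\mu(d_1)\mu(d_2)}{(d_1d_2)^{l-1}}=n\prod_p\Big(1-\frac{2}{p^l}\Big)+O_{l,\varepsilon}(n^{\varepsilon}),$$ where $\mu$ is the Möbius function and $p$ runs over all primes. *)

theory Defs
  imports "HOL-Analysis.Analysis" "HOL-Computational_Algebra.Squarefree"
    "HOL-Library.Landau_Symbols"
begin

definition moebius_mu :: "nat \<Rightarrow> int" where
  "moebius_mu n = (if n = 0 then 0
     else if squarefree n then (-1) ^ card (prime_factors n) else 0)"

end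

theory Submission
  imports Defs
begin


lemma crt_char:
  fixes d1 d2 :: nat
  assumes cop: "coprime d1 d2" and "d1 \<ge> 1" "d2 \<ge> 1"
  obtains r where "r < d1 * d2" "\<And>i. (d1 dvd i \<and> d2 dvd (i + 1)) \<longleftrightarrow> i mod (d1 * d2) = r"
proof -
  have nz: "d1 \<noteq> 0" "d2 \<noteq> 0" using assms by auto
  obtain x q1 q2 where x: "x = 0 + q1 * d1" "x = (d2 - 1) + q2 * d2"
    using chinese_remainder[OF cop nz, of 0 "d2 - 1"] by blast
  have x1: "int d1 dvd int x" using x by simp
  have "x + 1 = (q2 + 1) * d2" using x assms(3) by simp
  then have "d2 dvd x + 1" by simp
  then have "int d2 dvd int (x + 1)" by (simp only: int_dvd_int_iff)
  then have x2: "int d2 dvd int x + 1" by (simp add: add.commute)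
  have icop: "coprime (int d1) (int d2)" using cop by simp
  have key: "(d1 dvd i \<and> d2 dvd (i + 1)) \<longleftrightarrow> i mod (d1 * d2) = x mod (d1 * d2)" for i
  proof -
    have "(d1 dvd i \<and> d2 dvd (i + 1)) \<longleftrightarrow> (int d1 dvd int i - int x \<and> int d2 dvd int i - int x)"
    proof -
      have a: "int d1 dvd int i \<longleftrightarrow> int d1 dvd int i - int x" using x1
        by (simp add: dvd_diff_left_iff x1)
      have b: "int d2 dvd int i + 1 \<longleftrightarrow> int d2 dvd int i - int x" using x2
        by (smt (verit, ccfv_SIG) dvd_diff_right_iff x2)
      show ?thesis using a b int_dvd_int_iff[of d1 i] int_dvd_int_iff[of d2 "i+1"] by (simp add: add.commute)
    qed
    also have "\<dots> \<longleftrightarrow> int d1 * int d2 dvd int i - int x"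
      using icop by (metis divides_mult dvd_mult_left dvd_mult_right)
    also have "\<dots> \<longleftrightarrow> int i mod int (d1*d2) = int x mod int (d1*d2)"
      by (simp add: mod_eq_dvd_iff)
    also have "\<dots> \<longleftrightarrow> i mod (d1 * d2) = x mod (d1 * d2)"
      by (metis of_nat_eq_iff of_nat_mod)
    finally show ?thesis .
  qed
  show ?thesis
    by (rule that[of "x mod (d1*d2)"]) (use assms key in auto)
qed

lemma count_bound:
  fixes d1 d2 n :: nat
  assumes cop: "coprime d1 d2" and "d1 \<ge> 1" "d2 \<ge> 1"
  shows "\<bar>real (card {i\<in>{1..n}. d1*d2 \<le> i \<and> d1 dvd i \<and> d2 dvd (i+1)}) - real n / real (d1*d2)\<bar> \<le> 2"
proof -
  define m where "m = d1 * d2"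
  have m: "m \<ge> 1" using assms by (simp add: m_def)
  obtain r where r: "r < m" "\<And>i. (d1 dvd i \<and> d2 dvd (i + 1)) \<longleftrightarrow> i mod m = r"
    using crt_char[OF assms] unfolding m_def by blast
  define C where "C = {i\<in>{1..n}. m \<le> i \<and> i mod m = r}"
  have CC: "{i\<in>{1..n}. m \<le> i \<and> d1 dvd i \<and> d2 dvd (i+1)} = C"
    unfolding C_def using r by auto
  define q where "q = n div m"
  have up: "card C \<le> q"
  proof -
    have "inj_on (\<lambda>i. i div m) C"
    proof
      fix i j assume "i \<in> C" "j \<in> C" "i div m = j div m"
      then show "i = j" unfolding C_def by (metis (mono_tags) div_mult_mod_eq mem_Collect_eq)
    qed
    moreover have "(\<lambda>i. i div m) ` C \<subseteq> {1..q}"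
      unfolding C_def q_def using m by (auto intro: div_le_mono simp: div_le_mono Suc_le_eq div_greater_zero_iff)
    ultimately show ?thesis by (metis card_atLeastAtMost card_inj_on_le finite_atLeastAtMost diff_Suc_1)
  qed
  have lo: "q - 1 \<le> card C"
  proof -
    have "inj_on (\<lambda>k. k*m + r) {1..<q}" using m by (auto simp: inj_on_def)
    moreover have "(\<lambda>k. k*m + r) ` {1..<q} \<subseteq> C"
    proof
      fix y assume "y \<in> (\<lambda>k. k*m + r) ` {1..<q}"
      then obtain k where k: "1 \<le> k" "k < q" "y = k*m + r" by auto
      have "k*m + r < (k+1)*m" using r by simp
      also have "\<dots> \<le> q * m" using k by (intro mult_right_mono) auto
      also have "\<dots> \<le> n" unfolding q_def by (metis div_mult_mod_eq le_add1)
      finally have "y \<le> n" using k by simp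
      moreover have "m \<le> y" using k by (metis le_add1 mult_1 mult_le_mono1 order_trans)
      moreover have "y mod m = r" using k r by simp
      ultimately show "y \<in> C" unfolding C_def using m by auto
    qed
    moreover have "finite C" unfolding C_def by auto
    ultimately show ?thesis by (metis card_atLeastLessThan card_inj_on_le)
  qed
  have q1: "real q \<le> real n / real m"
  proof -
    have "q * m \<le> n" unfolding q_def by (metis div_mult_mod_eq le_add1)
    then have "real q * real m \<le> real n" by (metis of_nat_le_iff of_nat_mult)
    then show ?thesis using m by (simp add: le_divide_eq)
  qed
  have q2: "real n / real m < real q + 1"
  proof -
    have "n < (q+1) * m" unfolding q_def using m
      by (metis add_le_same_cancel1 dual_order.strict_trans1 leI less_eq_div_iff_mult_less_eq not_one_le_zero)
    then have "real n < (real q + 1) * real m" by (metis of_nat_1 of_nat_add of_nat_less_iff of_nat_mult)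
    then show ?thesis using m by (simp add: divide_less_eq)
  qed
  have "real (card C) \<le> real q" using up by simp
  moreover have "real q - 1 \<le> real (card C)" using lo by linarith
  ultimately show ?thesis unfolding m_def[symmetric] CC using q1 q2 by linarith
qed



lemma pf_prod:
  fixes B :: "nat set"
  assumes "finite B" "\<forall>p\<in>B. prime p"
  shows "prime_factors (\<Prod>B) = B"
proof -
  have "0 \<notin> id ` B" using assms(2) by auto
  then have "prime_factors (prod id B) = \<Union>((prime_factors \<circ> id) ` B)"
    using prime_factors_prod[OF assms(1)] by blast
  also have "\<dots> = B" using assms(2) by (auto simp: prime_prime_factors)
  finally show ?thesis by simp
qed

lemma prod_pos:
  fixes B :: "nat set"
  assumes "\<forall>p\<in>B. prime p"
  shows "\<Prod>B \<ge> 1"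
  using assms by (metis Suc_le_eq gr0I not_prime_0 prod_zero_iff linorder_not_le less_one le_zero_eq prod.infinite)

lemma sqf_prod:
  fixes B :: "nat set"
  assumes "\<forall>p\<in>B. prime p"
  shows "squarefree (\<Prod>B)"
proof -
  have "squarefree (prod id B)"
    by (rule squarefree_prod_coprime) (use assms in \<open>auto intro: primes_coprime squarefree_prime\<close>)
  then show ?thesis by simp
qed

lemma mu_prod:
  fixes B :: "nat set"
  assumes "finite B" "\<forall>p\<in>B. prime p"
  shows "moebius_mu (\<Prod>B) = (-1) ^ card B"
  using prod_pos[OF assms(2)] sqf_prod[OF assms(2)] pf_prod[OF assms]
  unfolding moebius_mu_def by simp

lemma w_eq:
  fixes B :: "nat set"
  assumes "finite B" "\<forall>p\<in>B. prime p"
  shows "real_of_int (moebius_mu (\<Prod>B)) / real (\<Prod>B) ^ l = (\<Prod>p\<in>B. - 1 / real p ^ l)"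
  unfolding mu_prod[OF assms] prod_dividef
  by (simp add: prod_power_distrib of_nat_prod)

lemma coprime_prod_disj:
  fixes B1 B2 :: "nat set"
  assumes "\<forall>p\<in>B1. prime p" "\<forall>p\<in>B2. prime p" "B1 \<inter> B2 = {}"
  shows "coprime (\<Prod>B1) (\<Prod>B2)"
proof -
  have "coprime (prod id B1) (prod id B2)"
    by (intro prod_coprime_left prod_coprime_right) (use assms in \<open>auto intro: primes_coprime\<close>)
  then show ?thesis by simp
qed

lemma sqf_id:
  fixes d :: nat
  assumes "squarefree d"
  shows "\<Prod>(prime_factors d) = d"
proof -
  have d0: "d \<noteq> 0" using assms not_squarefree_0 by metis
  have "(\<Prod>p\<in>prime_factors d. p ^ multiplicity p d) = normalize d" by (rule prod_prime_factors[OF d0])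
  moreover have "\<forall>p\<in>prime_factors d. multiplicity p d = 1"
    using assms squarefree_factorial_semiring'[OF d0] by blast
  ultimately show ?thesis by simp
qed

definition DD :: "nat set \<Rightarrow> (nat set \<times> nat set) set" where
  "DD A = {(B1, B2). B1 \<subseteq> A \<and> B2 \<subseteq> A \<and> B1 \<inter> B2 = {}}"

lemma finite_DD: "finite A \<Longrightarrow> finite (DD A)"
  by (rule finite_subset[of _ "Pow A \<times> Pow A"]) (auto simp: DD_def)

lemma euler_fin:
  fixes x :: "nat \<Rightarrow> real"
  assumes "finite A"
  shows "(\<Prod>p\<in>A. 1 + 2 * x p) = (\<Sum>(B1, B2)\<in>DD A. (\<Prod>p\<in>B1. x p) * (\<Prod>p\<in>B2. x p))"
proof -
  have "(\<Prod>p\<in>A. 1 + 2 * x p) = (\<Prod>p\<in>A. (x p + x p) + 1)"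
    by (intro prod.cong) auto
  also have "\<dots> = (\<Sum>X\<in>Pow A. (\<Prod>p\<in>X. x p + x p) * (\<Prod>p\<in>A - X. 1))"
    by (rule prod_add[OF assms])
  also have "\<dots> = (\<Sum>X\<in>Pow A. \<Sum>Y\<in>Pow X. (\<Prod>p\<in>Y. x p) * (\<Prod>p\<in>X - Y. x p))"
  proof (intro sum.cong refl)
    fix X assume "X \<in> Pow A"
    then have "finite X" using assms finite_subset by auto
    then show "(\<Prod>p\<in>X. x p + x p) * (\<Prod>p\<in>A - X. 1) = (\<Sum>Y\<in>Pow X. (\<Prod>p\<in>Y. x p) * (\<Prod>p\<in>X - Y. x p))"
      using prod_add[of X x x] by simp
  qed
  also have "\<dots> = (\<Sum>(X, Y)\<in>Sigma (Pow A) Pow. (\<Prod>p\<in>Y. x p) * (\<Prod>p\<in>X - Y. x p))"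
    by (rule sum.Sigma) (use assms in \<open>auto intro: finite_subset\<close>)
  also have "\<dots> = (\<Sum>(B1, B2)\<in>DD A. (\<Prod>p\<in>B1. x p) * (\<Prod>p\<in>B2. x p))"
    by (rule sum.reindex_bij_witness[where j = "\<lambda>(X, Y). (Y, X - Y)" and i = "\<lambda>(B1, B2). (B1 \<union> B2, B1)"])
       (auto simp: DD_def)
  finally show ?thesis .
qed



lemma pair_bound:
  fixes a :: "nat \<Rightarrow> real" and S :: "(nat \<times> nat) set"
  assumes nn: "\<And>k. a k \<ge> 0" and sa: "summable a" and fin: "finite S"
  shows "(\<Sum>(x, y)\<in>S. a x * a y) \<le> (suminf a)^2"
proof -
  have "(\<Sum>(x, y)\<in>S. a x * a y) \<le> (\<Sum>(x, y)\<in>fst ` S \<times> snd ` S. a x * a y)"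
    by (rule sum_mono2) (use fin nn in \<open>auto intro: mult_nonneg_nonneg simp: rev_image_eqI\<close>)
  also have "\<dots> = (\<Sum>x\<in>fst ` S. \<Sum>y\<in>snd ` S. a x * a y)"
    by (rule sum.cartesian_product[symmetric])
  also have "\<dots> = (\<Sum>x\<in>fst ` S. a x) * (\<Sum>y\<in>snd ` S. a y)"
    by (rule sum_product[symmetric])
  also have "\<dots> \<le> suminf a * suminf a"
    by (intro mult_mono sum_le_suminf sa) (use fin nn suminf_nonneg[OF sa] in \<open>auto intro: sum_nonneg\<close>)
  finally show ?thesis by (simp add: power2_eq_square)
qed

lemma rankin1:
  fixes d1 d2 n :: nat and \<delta> :: real
  assumes "d1 \<ge> 1" "d2 \<ge> 1" "d1 * d2 \<le> n" "l \<ge> 2" "\<delta> > 0"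
  shows "1 / real (d1 * d2) ^ (l - 1) \<le> real n powr \<delta> * (real d1 powr -(1+\<delta>) * real d2 powr -(1+\<delta>))"
proof -
  define m where "m = real (d1 * d2)"
  have m1: "m \<ge> 1" using assms unfolding m_def by (metis mult_le_mono nat_mult_1 of_nat_1 of_nat_le_iff)
  have mn: "m \<le> real n" using assms(3) unfolding m_def by (simp only: of_nat_le_iff)
  have "1 / m ^ (l - 1) \<le> 1 / m ^ 1"
    by (intro divide_left_mono power_increasing) (use assms m1 in auto)
  also have "\<dots> = m powr \<delta> * m powr -(1+\<delta>)"
    using m1 by (simp add: powr_add[symmetric] powr_minus_divide)
  also have "\<dots> \<le> real n powr \<delta> * m powr -(1+\<delta>)"
    by (intro mult_right_mono powr_mono2) (use assms m1 mn in auto)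
  finally show ?thesis unfolding m_def by (simp add: powr_mult)
qed

lemma rankin2:
  fixes d1 d2 n :: nat and \<delta> :: real
  assumes "d1 * d2 > n" "n \<ge> 1" "l \<ge> 2" "\<delta> > 0" "\<delta> \<le> 1"
  shows "1 / real (d1 * d2) ^ l \<le> real n powr (\<delta> - 1) * (real d1 powr -(1+\<delta>) * real d2 powr -(1+\<delta>))"
proof -
  define m where "m = real (d1 * d2)"
  have m1: "m \<ge> 1" using assms unfolding m_def by linarith
  have mn: "m \<ge> real n" using less_imp_le[OF assms(1)] unfolding m_def by (simp only: of_nat_le_iff)
  have "1 / m ^ l \<le> 1 / m ^ 2"
    by (intro divide_left_mono power_increasing) (use assms m1 in auto)
  also have "\<dots> = m powr (\<delta> - 1) * m powr -(1+\<delta>)"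
    using m1 by (simp add: powr_add[symmetric] powr_minus_divide powr_realpow)
  also have "\<dots> \<le> real n powr (\<delta> - 1) * m powr -(1+\<delta>)"
    by (intro mult_right_mono powr_mono2') (use assms m1 mn in auto)
  finally show ?thesis unfolding m_def by (simp add: powr_mult)
qed

lemma prod_conv:
  assumes "l \<ge> (2::nat)"
  shows "convergent_prod (\<lambda>k::nat. if prime k then 1 - 2 / real k ^ l else 1)"
proof -
  have g: "summable (\<lambda>k::nat. 2 * inverse (real k ^ l))"
    using inverse_power_summable[OF assms] by (intro summable_mult)
  have b: "norm (norm ((if prime k then 1 - 2 / real k ^ l else 1) - 1)) \<le> 2 * inverse (real k ^ l)" for k :: nat
    by (auto simp: divide_inverse)
  have "summable (\<lambda>k. norm ((if prime k then 1 - 2 / real k ^ l else 1) - 1))"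
    using g b by (rule summable_comparison_test')
  then show ?thesis
    by (intro abs_convergent_prod_imp_convergent_prod summable_imp_abs_convergent_prod)
qed

lemma prod_lim:
  assumes "l \<ge> (2::nat)"
  shows "(\<lambda>N. \<Prod>p\<in>{p. prime p \<and> p \<le> N}. 1 - 2 / real p ^ l)
     \<longlonglongrightarrow> (\<Prod>p. if prime p then 1 - 2 / real p ^ l else 1)"
proof -
  have "(\<Prod>p\<in>{p. prime p \<and> p \<le> N}. 1 - 2 / real p ^ l) = (\<Prod>p\<le>N. if prime p then 1 - 2 / real p ^ l else 1)" for N
  proof -
    have e: "{p. prime p \<and> p \<le> N} = {p\<in>{..N}. prime p}" by auto
    show ?thesis unfolding e by (rule prod.inter_filter) simp
  qed
  then show ?thesis using convergent_prod_LIMSEQ[OF prod_conv[OF assms]] by simp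
qed


lemma le_prod:
  fixes d1 d2 n :: nat
  assumes "d1 \<ge> 1" "d2 \<ge> 1" "d1 * d2 \<le> n"
  shows "d1 \<le> n \<and> d2 \<le> n"
proof -
  have "d1 * 1 \<le> d1 * d2" by (rule mult_le_mono2) (rule assms(2))
  moreover have "1 * d2 \<le> d1 * d2" by (rule mult_le_mono1) (rule assms(1))
  ultimately show ?thesis using assms(3) by linarith
qed

lemma mu_abs: "\<bar>moebius_mu d\<bar> \<le> 1"
  by (auto simp: moebius_mu_def)

lemma G_abs:
  fixes d1 d2 k :: nat
  shows "\<bar>real_of_int (moebius_mu d1 * moebius_mu d2) / real (d1 * d2) ^ k\<bar> \<le> 1 / real (d1 * d2) ^ k"
proof -
  have "\<bar>real_of_int (moebius_mu d1 * moebius_mu d2)\<bar> \<le> 1"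
    using mu_abs[of d1] mu_abs[of d2]
    by (simp only: of_int_abs[symmetric] abs_mult of_int_le_1_iff)
       (metis abs_ge_zero mult_le_one)
  then show ?thesis by (simp add: abs_divide divide_right_mono)
qed

lemma G_split:
  fixes a b :: int and x y :: nat
  shows "real_of_int (a * b) / real (x * y) ^ l = (real_of_int a / real x ^ l) * (real_of_int b / real y ^ l)"
  by (simp add: power_mult_distrib)

lemma mu_nz_sqf: "moebius_mu d \<noteq> 0 \<Longrightarrow> squarefree d"
  by (auto simp: moebius_mu_def split: if_splits)

theorem lemma2p9:
  fixes l :: nat and \<epsilon> :: real
  assumes "l \<ge> 2" and "\<epsilon> > 0"
  shows "(\<lambda>n::nat.
      (\<Sum>i\<in>{1..n}. \<Sum>(d1, d2)\<in>{(d1, d2). d1 \<ge> 1 \<and> d2 \<ge> 1 \<and> d1 * d2 \<le> i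
              \<and> d1 dvd i \<and> d2 dvd (i + 1) \<and> coprime d1 d2}.
          real_of_int (moebius_mu d1 * moebius_mu d2) / real (d1 * d2) ^ (l - 1))
      - real n * (\<Prod>p. if prime p then 1 - 2 / real p ^ l else 1))
    \<in> O(\<lambda>n. real n powr \<epsilon>)"
proof -
  define \<delta> where "\<delta> = min \<epsilon> 1"
  have \<delta>: "\<delta> > 0" "\<delta> \<le> 1" "\<delta> \<le> \<epsilon>" using assms by (auto simp: \<delta>_def)
  define a where "a = (\<lambda>k::nat. real k powr -(1+\<delta>))"
  have a_nn: "\<And>k. a k \<ge> 0" by (simp add: a_def)
  have a_sum: "summable a" unfolding a_def using \<delta> by (subst summable_real_powr_iff) auto
  define Z where "Z = (suminf a)^2"
  have Zb: "\<And>S. finite S \<Longrightarrow> (\<Sum>(x, y)\<in>S. a x * a y) \<le> Z"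
    unfolding Z_def by (rule pair_bound[OF a_nn a_sum])
  have Z0: "Z \<ge> 0" by (simp add: Z_def)
  define h where "h = (\<lambda>d1 d2::nat. real_of_int (moebius_mu d1 * moebius_mu d2) / real (d1 * d2) ^ (l - 1))"
  define G where "G = (\<lambda>d1 d2::nat. real_of_int (moebius_mu d1 * moebius_mu d2) / real (d1 * d2) ^ l)"
  define Q where "Q = (\<lambda>n::nat. {(d1, d2). d1 \<ge> 1 \<and> d2 \<ge> 1 \<and> d1 * d2 \<le> n \<and> coprime d1 d2})"
  define cnt where "cnt = (\<lambda>n d1 d2::nat. card {i\<in>{1..n}. d1*d2 \<le> i \<and> d1 dvd i \<and> d2 dvd (i+1)})"
  define S where "S = (\<lambda>n::nat. \<Sum>i\<in>{1..n}. \<Sum>(d1, d2)\<in>{(d1, d2). d1 \<ge> 1 \<and> d2 \<ge> 1 \<and> d1 * d2 \<le> i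
              \<and> d1 dvd i \<and> d2 dvd (i + 1) \<and> coprime d1 d2}.
          real_of_int (moebius_mu d1 * moebius_mu d2) / real (d1 * d2) ^ (l - 1))"
  define P where "P = (\<Prod>p. if prime p then 1 - 2 / real p ^ l else 1)"
  have finQ: "finite (Q n)" for n
  proof (rule finite_subset[of _ "{..n} \<times> {..n}"])
    show "Q n \<subseteq> {..n} \<times> {..n}"
    proof
      fix d assume "d \<in> Q n"
      then obtain d1 d2 where "d = (d1,d2)" "d1 \<ge> 1" "d2 \<ge> 1" "d1*d2 \<le> n" by (auto simp: Q_def)
      then show "d \<in> {..n} \<times> {..n}" using le_prod[of d1 d2 n] by auto
    qed
  qed auto
  have stepA: "S n = (\<Sum>(d1, d2)\<in>Q n. h d1 d2 * real (cnt n d1 d2))" for n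
  proof -
    define R where "R = (\<lambda>i (d::nat\<times>nat). fst d * snd d \<le> i \<and> fst d dvd i \<and> snd d dvd (i + 1))"
    have "S n = (\<Sum>i\<in>{1..n}. \<Sum>d\<in>{d. d \<in> Q n \<and> R i d}. case_prod h d)"
      unfolding S_def
    proof (rule sum.cong[OF refl])
      fix i assume "i \<in> {1..n}"
      then have "{(d1, d2). d1 \<ge> 1 \<and> d2 \<ge> 1 \<and> d1 * d2 \<le> i \<and> d1 dvd i \<and> d2 dvd (i + 1) \<and> coprime d1 d2}
          = {d. d \<in> Q n \<and> R i d}"
        by (auto simp: Q_def R_def)
      then show "(\<Sum>(d1, d2)\<in>{(d1, d2). d1 \<ge> 1 \<and> d2 \<ge> 1 \<and> d1 * d2 \<le> i \<and> d1 dvd i \<and> d2 dvd (i + 1) \<and> coprime d1 d2}.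
          real_of_int (moebius_mu d1 * moebius_mu d2) / real (d1 * d2) ^ (l - 1))
          = (\<Sum>d\<in>{d. d \<in> Q n \<and> R i d}. case_prod h d)"
        by (simp add: h_def)
    qed
    also have "\<dots> = (\<Sum>d\<in>Q n. \<Sum>i\<in>{i. i \<in> {1..n} \<and> R i d}. case_prod h d)"
      by (rule sum.swap_restrict) (auto simp: finQ)
    also have "\<dots> = (\<Sum>(d1, d2)\<in>Q n. h d1 d2 * real (cnt n d1 d2))"
    proof (intro sum.cong refl)
      fix d :: "nat \<times> nat"
      obtain d1 d2 where d: "d = (d1, d2)" by (cases d)
      have "{i. i \<in> {1..n} \<and> R i d} = {i\<in>{1..n}. d1*d2 \<le> i \<and> d1 dvd i \<and> d2 dvd (i+1)}"
        by (auto simp: R_def d)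
      then show "(\<Sum>i\<in>{i. i \<in> {1..n} \<and> R i d}. case_prod h d) = (case d of (d1, d2) \<Rightarrow> h d1 d2 * real (cnt n d1 d2))"
        by (simp add: d cnt_def)
    qed
    finally show ?thesis .
  qed
  have stepB: "\<bar>S n - real n * (\<Sum>(d1, d2)\<in>Q n. G d1 d2)\<bar> \<le> 2 * real n powr \<delta> * Z" for n
  proof -
    have GH: "G d1 d2 = h d1 d2 / real (d1 * d2)" for d1 d2
    proof -
      obtain k where k: "l = Suc k" using assms(1) by (cases l) auto
      show ?thesis unfolding G_def h_def k by simp
    qed
    have pt: "\<bar>h d1 d2 * (real (cnt n d1 d2) - real n / real (d1*d2))\<bar> \<le> 2 * (real n powr \<delta> * (a d1 * a d2))"
      if d: "d1 \<ge> 1" "d2 \<ge> 1" "d1 * d2 \<le> n" "coprime d1 d2" for d1 d2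
    proof -
      have hb: "\<bar>h d1 d2\<bar> \<le> 1 / real (d1 * d2) ^ (l - 1)" unfolding h_def by (rule G_abs)
      have cb: "\<bar>real (cnt n d1 d2) - real n / real (d1*d2)\<bar> \<le> 2"
        unfolding cnt_def using count_bound[OF d(4,1,2)] by simp
      have "\<bar>h d1 d2 * (real (cnt n d1 d2) - real n / real (d1*d2))\<bar> \<le> (1 / real (d1 * d2) ^ (l - 1)) * 2"
        unfolding abs_mult by (intro mult_mono hb cb) auto
      also have "\<dots> \<le> (real n powr \<delta> * (a d1 * a d2)) * 2"
        using rankin1[OF d(1-3) assms(1) \<delta>(1)] unfolding a_def by (intro mult_right_mono) auto
      finally show ?thesis by simp
    qed
    have pt': "\<bar>h d1 d2 * (real (cnt n d1 d2) - real n / (real d1 * real d2))\<bar> \<le> 2 * (real n powr \<delta> * (a d1 * a d2))"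
      if d: "d1 \<ge> 1" "d2 \<ge> 1" "d1 * d2 \<le> n" "coprime d1 d2" for d1 d2
      using pt[OF d] by simp
    have "S n - real n * (\<Sum>(d1, d2)\<in>Q n. G d1 d2) = (\<Sum>(d1, d2)\<in>Q n. h d1 d2 * (real (cnt n d1 d2) - real n / real (d1*d2)))"
      unfolding stepA sum_distrib_left sum_subtractf[symmetric]
      by (intro sum.cong refl) (auto simp: GH algebra_simps)
    also have "\<bar>\<dots>\<bar> \<le> (\<Sum>(d1, d2)\<in>Q n. 2 * (real n powr \<delta> * (a d1 * a d2)))"
      by (rule order.trans[OF sum_abs], rule sum_mono) (auto simp: Q_def intro: pt')
    also have "\<dots> = 2 * real n powr \<delta> * (\<Sum>(d1, d2)\<in>Q n. a d1 * a d2)"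
      by (simp add: sum_distrib_left case_prod_unfold mult.assoc)
    also have "\<dots> \<le> 2 * real n powr \<delta> * Z"
      by (intro mult_left_mono Zb finQ) auto
    finally show ?thesis .
  qed
  have stepC: "\<bar>S n - real n * (\<Prod>p\<in>{p. prime p \<and> p \<le> N}. 1 - 2 / real p ^ l)\<bar> \<le> 3 * Z * real n powr \<delta>"
    if n1: "n \<ge> 1" and nN: "N \<ge> n" for n N
  proof -
    define A where "A = {p. prime p \<and> p \<le> N}"
    have finA: "finite A" unfolding A_def by (rule finite_subset[of _ "{..N}"]) auto
    have subA: "finite B \<and> (\<forall>p\<in>B. prime p)" if "B \<subseteq> A" for B
      using that finA finite_subset unfolding A_def by blast
    define \<Phi> where "\<Phi> = (\<lambda>(B1::nat set, B2::nat set). (\<Prod>B1, \<Prod>B2))"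
    have eq1: "(\<Prod>p\<in>A. 1 - 2 / real p ^ l) = (\<Sum>(B1, B2)\<in>DD A. (\<Prod>p\<in>B1. - 1 / real p ^ l) * (\<Prod>p\<in>B2. - 1 / real p ^ l))"
      using euler_fin[OF finA, of "\<lambda>p. - 1 / real p ^ l"] by simp
    also have "\<dots> = (\<Sum>(B1, B2)\<in>DD A. G (\<Prod>B1) (\<Prod>B2))"
    proof (intro sum.cong refl)
      fix b assume "b \<in> DD A"
      then obtain B1 B2 where b: "b = (B1, B2)" "B1 \<subseteq> A" "B2 \<subseteq> A" by (auto simp: DD_def)
      show "(case b of (B1, B2) \<Rightarrow> (\<Prod>p\<in>B1. - 1 / real p ^ l) * (\<Prod>p\<in>B2. - 1 / real p ^ l)) = (case b of (B1, B2) \<Rightarrow> G (\<Prod>B1) (\<Prod>B2))"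
        unfolding b(1) prod.case G_def G_split
        using w_eq[of B1 l] w_eq[of B2 l] subA[OF b(2)] subA[OF b(3)] by simp
    qed
    also have "\<dots> = (\<Sum>d\<in>\<Phi> ` DD A. case_prod G d)"
    proof -
      have "inj_on \<Phi> (DD A)"
      proof
        fix b c assume b: "b \<in> DD A" and c: "c \<in> DD A" and e: "\<Phi> b = \<Phi> c"
        obtain B1 B2 where bb: "b = (B1, B2)" "B1 \<subseteq> A" "B2 \<subseteq> A" using b by (auto simp: DD_def)
        obtain C1 C2 where cc: "c = (C1, C2)" "C1 \<subseteq> A" "C2 \<subseteq> A" using c by (auto simp: DD_def)
        have "prime_factors (\<Prod>B1) = prime_factors (\<Prod>C1)" "prime_factors (\<Prod>B2) = prime_factors (\<Prod>C2)"
          using e by (auto simp: bb cc \<Phi>_def)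
        then show "b = c"
          using pf_prod[of B1] pf_prod[of B2] pf_prod[of C1] pf_prod[of C2]
            subA[OF bb(2)] subA[OF bb(3)] subA[OF cc(2)] subA[OF cc(3)] by (simp add: bb cc)
      qed
      then show ?thesis by (simp add: sum.reindex \<Phi>_def case_prod_unfold)
    qed
    finally have F: "(\<Prod>p\<in>A. 1 - 2 / real p ^ l) = (\<Sum>d\<in>\<Phi> ` DD A. case_prod G d)" .
    define E where "E = \<Phi> ` DD A"
    define E1 where "E1 = {d\<in>E. fst d * snd d \<le> n}"
    have finE: "finite E" unfolding E_def using finite_DD[OF finA] by simp
    have E_prop: "fst d \<ge> 1 \<and> snd d \<ge> 1 \<and> coprime (fst d) (snd d)" if "d \<in> E" for d
    proof -
      from that obtain b where b: "b \<in> DD A" "d = \<Phi> b" unfolding E_def by blast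
      obtain B1 B2 where bb0: "b = (B1, B2)" by (cases b)
      have bb: "d = (\<Prod>B1, \<Prod>B2)" "B1 \<subseteq> A" "B2 \<subseteq> A" "B1 \<inter> B2 = {}"
        using b unfolding bb0 \<Phi>_def DD_def by auto
      show ?thesis using prod_pos[of B1] prod_pos[of B2] coprime_prod_disj[of B1 B2]
          subA[OF bb(2)] subA[OF bb(3)] bb(4) by (simp add: bb(1))
    qed
    have split: "(\<Sum>d\<in>E. case_prod G d) = (\<Sum>d\<in>E - E1. case_prod G d) + (\<Sum>d\<in>E1. case_prod G d)"
      by (rule sum.subset_diff) (auto simp: E1_def finE)
    have E1Q: "(\<Sum>d\<in>E1. case_prod G d) = (\<Sum>d\<in>Q n. case_prod G d)"
    proof (rule sum.mono_neutral_left[OF finQ])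
      show "E1 \<subseteq> Q n" using E_prop by (force simp: E1_def Q_def)
      show "\<forall>d\<in>Q n - E1. case_prod G d = 0"
      proof
        fix d assume d: "d \<in> Q n - E1"
        then obtain d1 d2 where dd: "d = (d1, d2)" "d1 \<ge> 1" "d2 \<ge> 1" "d1 * d2 \<le> n" "coprime d1 d2"
          by (auto simp: Q_def)
        show "case_prod G d = 0"
        proof (rule ccontr)
          assume "case_prod G d \<noteq> 0"
          then have "moebius_mu d1 \<noteq> 0" "moebius_mu d2 \<noteq> 0" by (auto simp: G_def dd(1))
          then have sq: "squarefree d1" "squarefree d2" by (auto intro: mu_nz_sqf)
          have d1n: "d1 \<le> n" "d2 \<le> n"
            using le_prod[OF dd(2-4)] by auto
          have "(prime_factors d1, prime_factors d2) \<in> DD A"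
          proof -
            have "prime_factors d1 \<subseteq> A" "prime_factors d2 \<subseteq> A"
              using d1n nN dd(2,3) by (auto simp: A_def prime_factors_dvd intro: order.trans[OF dvd_imp_le])
            moreover have "prime_factors d1 \<inter> prime_factors d2 = {}"
            proof (rule ccontr)
              assume "prime_factors d1 \<inter> prime_factors d2 \<noteq> {}"
              then obtain p where "p \<in> prime_factors d1" "p \<in> prime_factors d2" by blast
              then have "prime p" "p dvd d1" "p dvd d2" by (auto simp: prime_factors_dvd)
              then show False using dd(5) coprime_common_divisor[of d1 d2 p] by auto
            qed
            ultimately show ?thesis by (auto simp: DD_def)
          qed
          then have "d \<in> E" unfolding E_def using sqf_id[OF sq(1)] sqf_id[OF sq(2)]
            by (force simp: dd(1) \<Phi>_def)
          then have "d \<in> E1" using dd by (simp add: E1_def)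
          then show False using d by simp
        qed
      qed
    qed
    have E2b: "\<bar>\<Sum>d\<in>E - E1. case_prod G d\<bar> \<le> real n powr (\<delta> - 1) * Z"
    proof -
      have pt: "\<bar>G d1 d2\<bar> \<le> real n powr (\<delta> - 1) * (a d1 * a d2)" if "d1 * d2 > n" for d1 d2
        using order.trans[OF G_abs rankin2[OF that n1 assms(1) \<delta>(1,2)]]
        unfolding G_def a_def .
      have "\<bar>\<Sum>d\<in>E - E1. case_prod G d\<bar> \<le> (\<Sum>d\<in>E - E1. real n powr (\<delta> - 1) * (a (fst d) * a (snd d)))"
        by (rule order.trans[OF sum_abs], rule sum_mono) (auto simp: E1_def not_le intro: pt)
      also have "\<dots> = real n powr (\<delta> - 1) * (\<Sum>(x, y)\<in>E - E1. a x * a y)"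
        by (simp add: sum_distrib_left case_prod_unfold)
      also have "\<dots> \<le> real n powr (\<delta> - 1) * Z"
        by (intro mult_left_mono Zb) (auto simp: finE)
      finally show ?thesis .
    qed
    have nn: "real n * real n powr (\<delta> - 1) = real n powr \<delta>"
      using n1 by (simp add: powr_add[symmetric] powr_mult_base)
    have "S n - real n * (\<Prod>p\<in>A. 1 - 2 / real p ^ l)
        = (S n - real n * (\<Sum>(d1, d2)\<in>Q n. G d1 d2)) - real n * (\<Sum>d\<in>E - E1. case_prod G d)"
      unfolding F E_def[symmetric] split E1Q by (simp add: algebra_simps)
    also have "\<bar>\<dots>\<bar> \<le> 2 * real n powr \<delta> * Z + real n * (real n powr (\<delta> - 1) * Z)"
    proof -
      have "\<bar>real n * (\<Sum>d\<in>E - E1. case_prod G d)\<bar> \<le> real n * (real n powr (\<delta> - 1) * Z)"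
        unfolding abs_mult using E2b by (simp add: mult_left_mono)
      then show ?thesis using stepB[of n] by linarith
    qed
    also have "\<dots> = 3 * Z * real n powr \<delta>"
      using nn by (simp add: algebra_simps)
    finally show ?thesis unfolding A_def .
  qed
  have stepD: "\<bar>S n - real n * P\<bar> \<le> 3 * Z * real n powr \<epsilon>" if n1: "n \<ge> 1" for n
  proof -
    have lim: "(\<lambda>N. \<bar>S n - real n * (\<Prod>p\<in>{p. prime p \<and> p \<le> N}. 1 - 2 / real p ^ l)\<bar>) \<longlonglongrightarrow> \<bar>S n - real n * P\<bar>"
      unfolding P_def by (intro tendsto_intros prod_lim[OF assms(1)])
    have "\<bar>S n - real n * P\<bar> \<le> 3 * Z * real n powr \<delta>"
      by (rule Lim_bounded[OF lim, of n]) (use stepC[OF n1] in auto)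
    also have "\<dots> \<le> 3 * Z * real n powr \<epsilon>"
      using n1 \<delta>(3) Z0 by (intro mult_left_mono powr_mono) auto
    finally show ?thesis .
  qed
  have ev: "eventually (\<lambda>n. \<bar>S n - real n * P\<bar> \<le> 3 * Z * \<bar>real n powr \<epsilon>\<bar>) at_top"
    using eventually_ge_at_top[of "1::nat"] by eventually_elim (use stepD in auto)
  show ?thesis
    by (rule bigoI[where c = "3 * Z"]) (use ev in \<open>simp add: S_def P_def\<close>)
qed

end
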